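(* Let $\Omega\subsetneq\mathbb{R}^n$ be open. For all $u\in C_c^\infty(\Omega)$, all $s>1$ and all $p\ge1$, $$\int_\Omega\frac{|\nabla u|^p}{d^{s-p}}dx\ \ge\ \Big(\frac{s-1}{p}\Big)^p\int_\Omega\frac{|u|^p}{d^s}dx+\Big(\frac{s-1}{p}\Big)^{p-1}\int_\Omega\frac{|u|^p}{d^{s-1}}(-\Delta d)\,dx,$$ where $-\Delta d$ is meant in the distributional sense.
   Context: $d(x):=\operatorname{dist}(x,\mathbb{R}^n\setminus\Omega)$. *)

theory Defs
  imports "HOL-Analysis.Analysis"
begin

definition dist_compl :: "'a::euclidean_space set \<Rightarrow> 'a \<Rightarrow> real" where
  "dist_compl \<Omega> x = infdist x (- \<Omega>)"

text \<open>Pointwise (classical) gradient where the function is differentiable, 0 elsewhere.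
  For locally Lipschitz functions this is the weak gradient (a.e.).\<close>
definition grad :: "('a::euclidean_space \<Rightarrow> real) \<Rightarrow> 'a \<Rightarrow> 'a" where
  "grad f x = (if f differentiable (at x)
               then (\<Sum>b\<in>Basis. frechet_derivative f (at x) b *\<^sub>R b) else 0)"

fun iter_pd :: "'a::euclidean_space list \<Rightarrow> ('a \<Rightarrow> real) \<Rightarrow> 'a \<Rightarrow> real" where
  "iter_pd [] f = f"
| "iter_pd (b # bs) f = (\<lambda>x. frechet_derivative (iter_pd bs f) (at x) b)"

definition smooth :: "('a::euclidean_space \<Rightarrow> real) \<Rightarrow> bool" where
  "smooth f \<longleftrightarrow> (\<forall>bs. set bs \<subseteq> Basis \<longrightarrow> iter_pd bs f differentiable_on UNIV)"

definition Cc_inf :: "'a::euclidean_space set \<Rightarrow> ('a \<Rightarrow> real) set" where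
  "Cc_inf \<Omega> = {u. smooth u \<and> compact (closure {x. u x \<noteq> 0}) \<and> closure {x. u x \<noteq> 0} \<subseteq> \<Omega>}"

text \<open>Pairing of the distribution -Laplace(w) on Omega with a (compactly supported, Lipschitz)
  test function phi:  <-Delta w, phi> = \<integral>_Omega grad w . grad phi dx
  (the definition of the distributional Laplacian, extended from C_c^infinity test
  functions by density).\<close>
definition neg_lap_pair :: "'a::euclidean_space set \<Rightarrow> ('a \<Rightarrow> real) \<Rightarrow> ('a \<Rightarrow> real) \<Rightarrow> real" where
  "neg_lap_pair \<Omega> w \<phi> = (\<integral>x\<in>\<Omega>. grad w x \<bullet> grad \<phi> x \<partial>lborel)"

end

theory Submission
  imports Defs
begin


lemma cvx_slope_mono:
  fixes f :: "real \<Rightarrow> real"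
  assumes f: "convex_on UNIV f" and "a < b" "b \<le> c" "c < d"
  shows "(f b - f a) / (b - a) \<le> (f d - f c) / (d - c)"
proof -
  have 3: "(f y - f x) / (y - x) \<le> (f z - f y) / (z - y)" if "x < y" "y < z" for x y z
  proof -
    have "(f x - f y) / (x - y) \<le> (f x - f z) / (x - z)"
      using convex_on_slope_le(1)[OF f _ _ that] by simp
    moreover have "(f x - f z) / (x - z) \<le> (f y - f z) / (y - z)"
      using convex_on_slope_le(2)[OF f _ _ that] by simp
    ultimately have "(f x - f y) / (x - y) \<le> (f y - f z) / (y - z)" by linarith
    moreover have "(f x - f y) / (x - y) = (f y - f x) / (y - x)"
      by (metis minus_diff_eq minus_divide_divide)
    moreover have "(f y - f z) / (y - z) = (f z - f y) / (z - y)"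
      by (metis minus_diff_eq minus_divide_divide)
    ultimately show ?thesis by simp
  qed
  show ?thesis
  proof (cases "b = c")
    case True then show ?thesis using 3[of a b d] assms by simp
  next
    case False
    then have "b < c" using assms by simp
    then show ?thesis using 3[of a b c] 3[of b c d] assms by linarith
  qed
qed

lemma cvx_slope_mono2:
  fixes f :: "real \<Rightarrow> real"
  assumes f: "convex_on UNIV f" and "a < b" "a \<le> c" "b \<le> d" "c < d"
  shows "(f b - f a) / (b - a) \<le> (f d - f c) / (d - c)"
proof -
  have 1: "(f b - f a) / (b - a) \<le> (f d - f a) / (d - a)" if "a < b" "b \<le> d" for a b d
  proof (cases "b = d")
    case False
    then have "(f a - f b) / (a - b) \<le> (f a - f d) / (a - d)"
      using convex_on_slope_le(1)[OF f, of a d b] that False by simp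
    then show ?thesis by (metis minus_diff_eq minus_divide_divide)
  qed simp
  have 2: "(f d - f a) / (d - a) \<le> (f d - f c) / (d - c)" if "a \<le> c" "c < d" for a c d
  proof (cases "a = c")
    case False
    then have "(f a - f d) / (a - d) \<le> (f c - f d) / (c - d)"
      using convex_on_slope_le(2)[OF f, of a d c] that False by simp
    then show ?thesis by (metis minus_diff_eq minus_divide_divide)
  qed simp
  show ?thesis using 1[of a b d] 2[of a c d] assms by linarith
qed

lemma slice_countable:
  fixes \<phi> :: "real \<Rightarrow> real"
  assumes f: "convex_on UNIV \<phi>"
  defines "h \<equiv> \<lambda>n::nat. 1 / real (Suc n)"
  shows "countable {t. \<exists>m::nat. \<forall>n. 1 / real (Suc m) \<le>
            (\<phi> (t + h n) - \<phi> t) / h n - (\<phi> t - \<phi> (t - h n)) / h n}"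
proof -
  define sp where "sp t n = (\<phi> (t + h n) - \<phi> t) / ((t + h n) - t)" for t n
  define sm where "sm t n = (\<phi> t - \<phi> (t - h n)) / (t - (t - h n))" for t n
  have hpos: "h n > 0" for n unfolding h_def by simp
  have hmono: "n \<le> n' \<Longrightarrow> h n' \<le> h n" for n n'
    unfolding h_def by (simp add: frac_le)
  have i: "sm t n \<le> sp t k" for t n k
    unfolding sm_def sp_def using cvx_slope_mono[OF f, of "t - h n" t t "t + h k"] hpos by simp
  have ii: "n \<le> n' \<Longrightarrow> sp t n' \<le> sp t n" for t n n'
    unfolding sp_def using cvx_slope_mono2[OF f, of t "t + h n'" t "t + h n"] hpos hmono by simp
  have iii: "n \<le> n' \<Longrightarrow> sm t n \<le> sm t n'" for t n n'
    unfolding sm_def using cvx_slope_mono2[OF f, of "t - h n" t "t - h n'" t] hpos hmono by simp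
  define R where "R t = Inf (range (sp t))" for t
  define L where "L t = Sup (range (sm t))" for t
  have bddb: "bdd_below (range (sp t))" for t
    using i by (intro bdd_belowI[of _ "sm t 0"]) auto
  have bdda: "bdd_above (range (sm t))" for t
    using i by (intro bdd_aboveI[of _ "sp t 0"]) auto
  have R_le: "R t \<le> sp t n" for t n
    unfolding R_def using bddb by (simp add: cInf_lower)
  have L_ge: "sm t n \<le> L t" for t n
    unfolding L_def using bdda by (simp add: cSup_upper)
  have iv: "R t \<le> L s" if "t < s" for t s
  proof -
    obtain n where n: "2 / (s - t) < real n"
      using reals_Archimedean2 by blast
    have "2 * h n \<le> s - t"
      using n that unfolding h_def by (simp add: field_simps)
    then have "sp t n \<le> sm s n"
      unfolding sp_def sm_def using cvx_slope_mono[OF f, of t "t + h n" "s - h n" s] hpos by simp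
    then show ?thesis using R_le[of t n] L_ge[of s n] by linarith
  qed
  have gap: "L t + c \<le> R t" if c: "\<forall>n. c \<le> sp t n - sm t n" for t c
  proof (rule ccontr)
    assume "\<not> L t + c \<le> R t"
    define e where "e = (L t + c - R t) / 2"
    have e: "e > 0" using \<open>\<not> L t + c \<le> R t\<close> unfolding e_def by simp
    have "Inf (range (sp t)) < R t + e" using e unfolding R_def by simp
    then obtain n1 where n1: "sp t n1 < R t + e"
      using cInf_less_iff[OF _ bddb] by blast
    have "L t - e < Sup (range (sm t))" using e unfolding L_def by simp
    then obtain n2 where n2: "L t - e < sm t n2"
      using less_cSup_iff[OF _ bdda] by blast
    have "sp t (max n1 n2) \<le> sp t n1" by (rule ii) simp
    moreover have "sm t n2 \<le> sm t (max n1 n2)" by (rule iii) simp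
    moreover have "c \<le> sp t (max n1 n2) - sm t (max n1 n2)" using c by blast
    moreover have "2 * e = L t + c - R t" unfolding e_def by simp
    ultimately show False using n1 n2 by linarith
  qed
  define S where "S = {t. \<exists>m::nat. \<forall>n. 1 / real (Suc m) \<le>
            (\<phi> (t + h n) - \<phi> t) / h n - (\<phi> t - \<phi> (t - h n)) / h n}"
  have LR: "L t < R t" if "t \<in> S" for t
  proof -
    from that obtain m where m: "\<forall>n. 1 / real (Suc m) \<le> sp t n - sm t n"
      unfolding S_def sp_def sm_def by auto
    from gap[OF m] show ?thesis by (smt (verit) divide_pos_pos of_nat_0_less_iff zero_less_Suc)
  qed
  have "\<forall>t\<in>S. \<exists>r\<in>\<rat>. L t < r \<and> r < R t"
    using LR Rats_dense_in_real by blast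
  then obtain r where r: "\<And>t. t \<in> S \<Longrightarrow> r t \<in> \<rat> \<and> L t < r t \<and> r t < R t"
    by metis
  have inj: "inj_on r S"
  proof (rule inj_onI)
    fix t s assume ts: "t \<in> S" "s \<in> S" "r t = r s"
    show "t = s"
    proof (rule ccontr)
      assume "t \<noteq> s"
      then consider "t < s" | "s < t" by linarith
      then show False
      proof cases
        case 1 then show False using iv[OF 1] r[OF ts(1)] r[OF ts(2)] ts(3) by linarith
      next
        case 2 then show False using iv[OF 2] r[OF ts(1)] r[OF ts(2)] ts(3) by linarith
      qed
    qed
  qed
  have "countable (r ` S)"
    using r by (intro countable_subset[OF _ countable_rat]) auto
  then have "countable S" using inj by (rule countable_image_inj_on)
  then show ?thesis unfolding S_def .
qed



lemma null_if_slices_null: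
  fixes B :: "'a::euclidean_space set" and b :: 'a
  assumes B: "B \<in> sets borel" and b: "b \<in> Basis"
    and sl: "\<And>x. {t::real. x + t *\<^sub>R b \<in> B} \<in> null_sets lborel"
  shows "B \<in> null_sets lborel"
proof -
  interpret P: product_sigma_finite "\<lambda>_::'a. lborel::real measure"
    by standard
  let ?T = "\<lambda>f::'a \<Rightarrow> real. \<Sum>c\<in>Basis. f c *\<^sub>R c"
  have Tm: "?T \<in> measurable (\<Pi>\<^sub>M c\<in>Basis. (lborel::real measure)) borel"
    by measurable
  have Bm[measurable]: "B \<in> sets borel" by (rule B)
  have "emeasure lborel B = (\<integral>\<^sup>+x. indicator B x \<partial>lborel)"
    by simp
  also have "\<dots> = (\<integral>\<^sup>+x. indicator B x \<partial>(distr (\<Pi>\<^sub>M c\<in>Basis. (lborel::real measure)) borel ?T))"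
    by (subst lborel_eq) simp
  also have "\<dots> = (\<integral>\<^sup>+f. indicator B (?T f) \<partial>(\<Pi>\<^sub>M c\<in>Basis. (lborel::real measure)))"
    by (rule nn_integral_distr[OF Tm]) simp
  also have "\<dots> = (\<integral>\<^sup>+f. indicator B (?T f) \<partial>(\<Pi>\<^sub>M c\<in>insert b (Basis - {b}). (lborel::real measure)))"
    using b by (simp add: insert_absorb)
  also have "\<dots> = (\<integral>\<^sup>+x. (\<integral>\<^sup>+y. indicator B (?T (x(b := y))) \<partial>lborel) \<partial>(\<Pi>\<^sub>M c\<in>Basis - {b}. (lborel::real measure)))"
  proof (rule P.product_nn_integral_insert)
    show "(\<lambda>f. indicator B (?T f)) \<in> borel_measurable (\<Pi>\<^sub>M c\<in>insert b (Basis - {b}). (lborel::real measure))"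
      using Tm b by (simp add: insert_absorb)
  qed auto
  also have "\<dots> = (\<integral>\<^sup>+x. 0 \<partial>(\<Pi>\<^sub>M c\<in>Basis - {b}. (lborel::real measure)))"
  proof (rule nn_integral_cong)
    fix x :: "'a \<Rightarrow> real"
    define x0 where "x0 = (\<Sum>c\<in>Basis - {b}. x c *\<^sub>R c)"
    have eq: "?T (x(b := y)) = x0 + y *\<^sub>R b" for y
    proof -
      have "?T (x(b := y)) = (x(b := y)) b *\<^sub>R b + (\<Sum>c\<in>Basis - {b}. (x(b := y)) c *\<^sub>R c)"
        using b by (simp add: sum.remove)
      also have "(\<Sum>c\<in>Basis - {b}. (x(b := y)) c *\<^sub>R c) = x0"
        unfolding x0_def by (rule sum.cong) auto
      finally show ?thesis by simp
    qed
    have "(\<integral>\<^sup>+y. indicator B (?T (x(b := y))) \<partial>lborel) = (\<integral>\<^sup>+y. indicator {t. x0 + t *\<^sub>R b \<in> B} y \<partial>lborel)"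
      by (rule nn_integral_cong) (simp only: eq indicator_def mem_Collect_eq)
    also have "\<dots> = emeasure lborel {t. x0 + t *\<^sub>R b \<in> B}"
      using sl[of x0] by (simp add: null_sets_def)
    also have "\<dots> = 0" using sl[of x0] by auto
    finally show "(\<integral>\<^sup>+y. indicator B (?T (x(b := y))) \<partial>lborel) = 0" .
  qed
  also have "\<dots> = 0" by simp
  finally show ?thesis using B by (simp add: null_sets_def)
qed



definition qp :: "('a::real_normed_vector \<Rightarrow> real) \<Rightarrow> 'a \<Rightarrow> 'a \<Rightarrow> nat \<Rightarrow> real" where
  "qp g x b n = real (Suc n) * (g (x + (1 / real (Suc n)) *\<^sub>R b) - g x)"
definition qm :: "('a::real_normed_vector \<Rightarrow> real) \<Rightarrow> 'a \<Rightarrow> 'a \<Rightarrow> nat \<Rightarrow> real" where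
  "qm g x b n = real (Suc n) * (g x - g (x - (1 / real (Suc n)) *\<^sub>R b))"
definition Nset :: "('a::real_normed_vector \<Rightarrow> real) \<Rightarrow> 'a \<Rightarrow> 'a set" where
  "Nset g b = (\<Union>m. \<Inter>n. {x. 1 / real (Suc m) \<le> qp g x b n - qm g x b n})"

lemma Nset_borel:
  fixes g :: "'a::euclidean_space \<Rightarrow> real"
  assumes "continuous_on UNIV g"
  shows "Nset g b \<in> sets borel"
proof -
  have "closed {x. 1 / real (Suc m) \<le> qp g x b n - qm g x b n}" for m n
    unfolding qp_def qm_def
    by (intro closed_Collect_le continuous_intros continuous_on_compose2[OF assms]) auto
  then show ?thesis unfolding Nset_def by (intro sets.countable_UN sets.countable_INT') auto
qed

lemma convex_on_line:
  fixes g :: "'a::real_vector \<Rightarrow> real"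
  assumes "convex_on UNIV g"
  shows "convex_on UNIV (\<lambda>t::real. g (x + t *\<^sub>R b))"
proof (rule convex_onI)
  fix t s u :: real assume "0 < u" "u < 1"
  have "x + ((1 - u) * t + u * s) *\<^sub>R b = (1 - u) *\<^sub>R (x + t *\<^sub>R b) + u *\<^sub>R (x + s *\<^sub>R b)"
    by (simp add: algebra_simps)
  then show "g (x + ((1 - u) *\<^sub>R t + u *\<^sub>R s) *\<^sub>R b) \<le> (1 - u) * g (x + t *\<^sub>R b) + u * g (x + s *\<^sub>R b)"
    using convex_onD[OF assms, of u "x + t *\<^sub>R b" "x + s *\<^sub>R b"] \<open>0 < u\<close> \<open>u < 1\<close> by simp
qed simp

lemma Nset_null:
  fixes g :: "'a::euclidean_space \<Rightarrow> real"
  assumes "convex_on UNIV g" "continuous_on UNIV g" "b \<in> Basis"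
  shows "Nset g b \<in> null_sets lborel"
proof (rule null_if_slices_null[OF Nset_borel[OF assms(2)] assms(3)])
  fix x :: 'a
  define \<phi> where "\<phi> t = g (x + t *\<^sub>R b)" for t
  define h where "h = (\<lambda>n::nat. 1 / real (Suc n))"
  have cv: "convex_on UNIV \<phi>" unfolding \<phi>_def by (rule convex_on_line[OF assms(1)])
  have qpe: "qp g (x + t *\<^sub>R b) b n = (\<phi> (t + h n) - \<phi> t) / h n" for t n
    unfolding qp_def \<phi>_def h_def by (simp add: algebra_simps)
  have qme: "qm g (x + t *\<^sub>R b) b n = (\<phi> t - \<phi> (t - h n)) / h n" for t n
    unfolding qm_def \<phi>_def h_def by (simp add: algebra_simps)
  have "{t::real. x + t *\<^sub>R b \<in> Nset g b} = {t. \<exists>m::nat. \<forall>n. 1 / real (Suc m) \<le>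
            (\<phi> (t + h n) - \<phi> t) / h n - (\<phi> t - \<phi> (t - h n)) / h n}"
    unfolding Nset_def by (simp add: qpe qme)
  moreover have "countable \<dots>"
    using slice_countable[OF cv] unfolding h_def by simp
  ultimately show "{t::real. x + t *\<^sub>R b \<in> Nset g b} \<in> null_sets lborel"
    by (simp add: countable_imp_null_set_lborel)
qed



lemma deriv_seq:
  fixes f :: "'a::real_normed_vector \<Rightarrow> real"
  assumes D: "(f has_derivative D) (at x)"
  shows "(\<lambda>n. real (Suc n) * (f (x + (1 / real (Suc n)) *\<^sub>R b) - f x)) \<longlonglongrightarrow> D b"
    and "(\<lambda>n. real (Suc n) * (f x - f (x - (1 / real (Suc n)) *\<^sub>R b))) \<longlonglongrightarrow> D b"
proof -
  define \<psi> where "\<psi> t = f (x + t *\<^sub>R b)" for t :: real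
  have "((\<lambda>t. x + t *\<^sub>R b) has_derivative (\<lambda>t. t *\<^sub>R b)) (at 0)"
    by (auto intro!: derivative_eq_intros)
  then have "(\<psi> has_derivative (\<lambda>t. D (t *\<^sub>R b))) (at 0)"
    unfolding \<psi>_def using has_derivative_compose[of "\<lambda>t. x + t *\<^sub>R b" _ 0 UNIV f D] D by simp
  moreover have "(\<lambda>t. D (t *\<^sub>R b)) = (\<lambda>t. D b * t)"
    using has_derivative_bounded_linear[OF D] by (auto simp: linear_simps(5) bounded_linear.linear linear_cmul mult.commute)
  ultimately have "(\<psi> has_field_derivative D b) (at 0)"
    by (simp add: has_field_derivative_def)
  then have lim: "((\<lambda>y. (\<psi> y - \<psi> 0) / (y - 0)) \<longlongrightarrow> D b) (at 0)"
    by (simp add: has_field_derivative_iff)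
  have s1: "filterlim (\<lambda>n. 1 / real (Suc n)) (at 0) sequentially"
    using LIMSEQ_inverse_real_of_nat by (auto simp: filterlim_at inverse_eq_divide)
  have s2: "filterlim (\<lambda>n. - (1 / real (Suc n))) (at 0) sequentially"
    using tendsto_minus[OF LIMSEQ_inverse_real_of_nat] by (auto simp: filterlim_at inverse_eq_divide)
  have "(\<lambda>n. (\<psi> (1 / real (Suc n)) - \<psi> 0) / (1 / real (Suc n) - 0)) \<longlonglongrightarrow> D b"
    using filterlim_compose[OF lim s1] by simp
  then show "(\<lambda>n. real (Suc n) * (f (x + (1 / real (Suc n)) *\<^sub>R b) - f x)) \<longlonglongrightarrow> D b"
    unfolding \<psi>_def by (simp add: mult.commute)
  have "(\<lambda>n. (\<psi> (- (1 / real (Suc n))) - \<psi> 0) / (- (1 / real (Suc n)) - 0)) \<longlonglongrightarrow> D b"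
    using filterlim_compose[OF lim s2] by simp
  moreover have "(\<psi> (- (1 / real (Suc n))) - \<psi> 0) / (- (1 / real (Suc n)) - 0)
      = real (Suc n) * (f x - f (x - (1 / real (Suc n)) *\<^sub>R b))" for n
    unfolding \<psi>_def by (simp add: field_simps)
  ultimately show "(\<lambda>n. real (Suc n) * (f x - f (x - (1 / real (Suc n)) *\<^sub>R b))) \<longlonglongrightarrow> D b"
    by simp
qed

lemma diff_not_Nset:
  fixes f :: "'a::real_normed_vector \<Rightarrow> real"
  assumes "f differentiable (at x)"
  shows "x \<notin> Nset f b"
proof
  obtain D where D: "(f has_derivative D) (at x)" using assms by (auto simp: differentiable_def)
  have "(\<lambda>n. qp f x b n - qm f x b n) \<longlonglongrightarrow> D b - D b"
    unfolding qp_def qm_def by (intro tendsto_diff deriv_seq[OF D])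
  then have lim0: "(\<lambda>n. qp f x b n - qm f x b n) \<longlonglongrightarrow> 0" by simp
  assume "x \<in> Nset f b"
  then obtain m where m: "\<And>n. 1 / real (Suc m) \<le> qp f x b n - qm f x b n"
    unfolding Nset_def by auto
  have "1 / real (Suc m) \<le> 0"
    using LIMSEQ_le_const[OF lim0] m by blast
  then show False by simp
qed



lemma cvx_1d_approx:
  fixes \<phi> :: "real \<Rightarrow> real"
  assumes cv: "convex_on UNIV \<phi>"
    and nN: "\<And>m. \<exists>n. (\<phi> (1 / real (Suc n)) - \<phi> 0) / (1 / real (Suc n))
               - (\<phi> 0 - \<phi> (- (1 / real (Suc n)))) / (1 / real (Suc n)) < 1 / real (Suc m)"
    and e: "e > 0"
  shows "\<exists>d>0. \<forall>t. \<bar>t\<bar> < d \<longrightarrow>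
      \<bar>\<phi> t - \<phi> 0 - t * Inf ((\<lambda>h. (\<phi> h - \<phi> 0) / h) ` {0<..})\<bar> \<le> e * \<bar>t\<bar>"
proof -
  define sp where "sp h = (\<phi> h - \<phi> 0) / h" for h
  define sm where "sm h = (\<phi> 0 - \<phi> (- h)) / h" for h
  define L where "L = Inf (sp ` {0<..})"
  have smsp: "sm a \<le> sp c" if "a > 0" "c > 0" for a c
    unfolding sm_def sp_def using cvx_slope_mono[OF cv, of "-a" 0 0 c] that by simp
  have spm: "sp t \<le> sp d" if "0 < t" "t \<le> d" for t d
    unfolding sp_def using cvx_slope_mono2[OF cv, of 0 t 0 d] that by simp
  have smm: "sm d \<le> sm t" if "0 < t" "t \<le> d" for t d
    unfolding sm_def using cvx_slope_mono2[OF cv, of "-d" 0 "-t" 0] that by simp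
  have bdd: "bdd_below (sp ` {0<..})"
    using smsp[of 1] by (intro bdd_belowI[of _ "sm 1"]) auto
  have Lle: "L \<le> sp t" if "t > 0" for t
    unfolding L_def using bdd that by (auto intro: cInf_lower)
  have Lge: "sm a \<le> L" if "a > 0" for a
    unfolding L_def using smsp[OF that] by (intro cInf_greatest) auto
  obtain m where m: "1 / real (Suc m) < e"
  proof -
    obtain k :: nat where "1 / e < real k" using reals_Archimedean2 by blast
    then have "1 / real (Suc k) < e" using e by (simp add: field_simps)
    then show ?thesis using that by blast
  qed
  obtain n where n: "sp (1 / real (Suc n)) - sm (1 / real (Suc n)) < 1 / real (Suc m)"
    using nN[of m] unfolding sp_def sm_def by blast
  define d where "d = 1 / real (Suc n)"
  have d: "d > 0" unfolding d_def by simp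
  have "\<bar>\<phi> t - \<phi> 0 - t * L\<bar> \<le> e * \<bar>t\<bar>" if t: "\<bar>t\<bar> < d" for t
  proof -
    consider "t = 0" | "t > 0" | "t < 0" by linarith
    then show ?thesis
    proof cases
      case 1 then show ?thesis by simp
    next
      case 2
      have "sm d \<le> L" "L \<le> sp t" "sp t \<le> sp d" using Lge[OF d] Lle[OF 2] spm[OF 2] t 2 by auto
      moreover have "\<phi> t - \<phi> 0 - t * L = t * (sp t - L)" unfolding sp_def using 2 by (simp add: field_simps)
      moreover have "sp d - sm d < e" using n m unfolding d_def by linarith
      ultimately have "0 \<le> \<phi> t - \<phi> 0 - t * L \<and> \<phi> t - \<phi> 0 - t * L \<le> e * t"
        using 2 by (auto intro!: mult_left_mono mult_nonneg_nonneg simp: mult.commute)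
      then show ?thesis using 2 by simp
    next
      case 3
      define a where "a = - t"
      have a: "a > 0" "a < d" using 3 t unfolding a_def by auto
      have "sm d \<le> sm a" "sm a \<le> L" "L \<le> sp d" using smm[of a d] a Lge[OF a(1)] Lle[OF d] by auto
      moreover have "\<phi> t - \<phi> 0 - t * L = a * (L - sm a)" unfolding sm_def a_def using 3 by (simp add: field_simps)
      moreover have "sp d - sm d < e" using n m unfolding d_def by linarith
      ultimately have "0 \<le> \<phi> t - \<phi> 0 - t * L \<and> \<phi> t - \<phi> 0 - t * L \<le> e * a"
        using a by (auto intro!: mult_left_mono mult_nonneg_nonneg simp: mult.commute)
      then show ?thesis using 3 unfolding a_def by simp
    qed
  qed
  then show ?thesis using d unfolding L_def sp_def by blast
qed



lemma cvx_diff: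
  fixes g :: "'a::euclidean_space \<Rightarrow> real"
  assumes cv: "convex_on UNIV g" and nN: "\<And>b. b \<in> Basis \<Longrightarrow> x \<notin> Nset g b"
  shows "g differentiable (at x)"
proof -
  define Lb where "Lb b = Inf ((\<lambda>h. (g (x + h *\<^sub>R b) - g x) / h) ` {0<..})" for b
  have appr: "\<exists>d>0. \<forall>t. \<bar>t\<bar> < d \<longrightarrow> \<bar>g (x + t *\<^sub>R b) - g x - t * Lb b\<bar> \<le> e * \<bar>t\<bar>"
    if b: "b \<in> Basis" and e: "e > 0" for b e
  proof -
    define \<phi> where "\<phi> t = g (x + t *\<^sub>R b)" for t
    have cvp: "convex_on UNIV \<phi>" unfolding \<phi>_def by (rule convex_on_line[OF cv])
    have "\<exists>n. (\<phi> (1 / real (Suc n)) - \<phi> 0) / (1 / real (Suc n))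
               - (\<phi> 0 - \<phi> (- (1 / real (Suc n)))) / (1 / real (Suc n)) < 1 / real (Suc m)" for m
    proof -
      from nN[OF b] obtain n where "\<not> 1 / real (Suc m) \<le> qp g x b n - qm g x b n"
        unfolding Nset_def by auto
      then show ?thesis unfolding qp_def qm_def \<phi>_def
        by (intro exI[of _ n]) (simp add: algebra_simps)
    qed
    from cvx_1d_approx[OF cvp this e] show ?thesis unfolding \<phi>_def Lb_def by simp
  qed
  define D where "D v = (\<Sum>b\<in>Basis. (v \<bullet> b) * Lb b)" for v
  have blD: "bounded_linear D" unfolding D_def
    by (intro bounded_linear_sum bounded_linear_compose[OF bounded_linear_mult_left bounded_linear_inner_left])
  have linD: "linear D" using blD bounded_linear.linear by blast
  have Db: "D (t *\<^sub>R b) = t * Lb b" if "b \<in> Basis" for t b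
  proof -
    have "D (t *\<^sub>R b) = (\<Sum>c\<in>Basis. (if c = b then t * Lb c else 0))"
      unfolding D_def using that by (intro sum.cong) (auto simp: inner_Basis)
    also have "\<dots> = t * Lb b" using that by simp
    finally show ?thesis .
  qed
  define \<psi> where "\<psi> v = g (x + v) - g x - D v" for v
  have cvpsi: "convex_on UNIV \<psi>"
  proof (rule convex_onI)
    fix u v w :: 'a and t :: real assume t: "0 < t" "t < 1"
    have "x + ((1 - t) *\<^sub>R v + t *\<^sub>R w) = (1 - t) *\<^sub>R (x + v) + t *\<^sub>R (x + w)"
      by (simp add: algebra_simps)
    then have "g (x + ((1 - t) *\<^sub>R v + t *\<^sub>R w)) \<le> (1 - t) * g (x + v) + t * g (x + w)"
      using convex_onD[OF cv, of t "x + v" "x + w"] t by simp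
    moreover have "D ((1 - t) *\<^sub>R v + t *\<^sub>R w) = (1 - t) * D v + t * D w"
      using linD by (simp add: linear_add linear_scale)
    ultimately show "\<psi> ((1 - t) *\<^sub>R v + t *\<^sub>R w) \<le> (1 - t) * \<psi> v + t * \<psi> w"
      unfolding \<psi>_def by (simp add: algebra_simps)
  qed simp
  have psi0: "\<psi> 0 = 0" unfolding \<psi>_def using linD by (simp add: linear_0)
  have main: "\<exists>d>0. \<forall>v. norm v < d \<longrightarrow> \<bar>\<psi> v\<bar> \<le> e * norm v" if e: "e > 0" for e
  proof -
    define N where "N = real DIM('a)"
    have N: "N \<ge> 1" unfolding N_def using DIM_positive[where 'a='a] by linarith
    have e': "e / N > 0" using e N by simp
    have "\<forall>b\<in>Basis. \<exists>d>0. \<forall>t. \<bar>t\<bar> < d \<longrightarrow> \<bar>g (x + t *\<^sub>R b) - g x - t * Lb b\<bar> \<le> e / N * \<bar>t\<bar>"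
      using appr e' by blast
    then obtain \<delta> where \<delta>: "\<And>b. b \<in> Basis \<Longrightarrow> \<delta> b > 0 \<and> (\<forall>t. \<bar>t\<bar> < \<delta> b \<longrightarrow>
        \<bar>g (x + t *\<^sub>R b) - g x - t * Lb b\<bar> \<le> e / N * \<bar>t\<bar>)"
      by metis
    define d where "d = Min (\<delta> ` Basis) / N"
    have Minpos: "Min (\<delta> ` Basis) > 0" using \<delta> by (simp add: Min_gr_iff)
    have d: "d > 0" unfolding d_def using Minpos N by simp
    have psib: "\<bar>\<psi> (t *\<^sub>R b)\<bar> \<le> e / N * \<bar>t\<bar>" if "b \<in> Basis" "\<bar>t\<bar> < \<delta> b" for b t
      using \<delta>[OF that(1)] that(2) Db[OF that(1)] unfolding \<psi>_def by auto
    have "\<bar>\<psi> v\<bar> \<le> e * norm v" if v: "norm v < d" for v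
    proof -
      have comp: "\<bar>N * (v \<bullet> b)\<bar> < \<delta> b" if b: "b \<in> Basis" for b
      proof -
        have "\<bar>N * (v \<bullet> b)\<bar> \<le> N * norm v"
          using Basis_le_norm[OF b, of v] N by (simp add: abs_mult)
        also have "\<dots> < N * d" using v N by simp
        also have "\<dots> = Min (\<delta> ` Basis)" unfolding d_def using N by simp
        also have "\<dots> \<le> \<delta> b" using b by simp
        finally show ?thesis .
      qed
      have up: "\<psi> w \<le> e * norm w" if w: "norm w < d" for w
      proof -
        have "w = (\<Sum>b\<in>Basis. (1 / N) *\<^sub>R ((N * (w \<bullet> b)) *\<^sub>R b))"
          using N by (simp add: euclidean_representation)
        then have "\<psi> w = \<psi> (\<Sum>b\<in>Basis. (1 / N) *\<^sub>R ((N * (w \<bullet> b)) *\<^sub>R b))" by simp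
        also have "\<dots> \<le> (\<Sum>b\<in>Basis. (1 / N) * \<psi> ((N * (w \<bullet> b)) *\<^sub>R b))"
          by (rule convex_on_sum[OF _ _ cvpsi]) (use N in \<open>auto simp: N_def\<close>)
        also have "\<dots> \<le> (\<Sum>b\<in>Basis. (1 / N) * (e / N * \<bar>N * (w \<bullet> b)\<bar>))"
        proof (rule sum_mono)
          fix b :: 'a assume b: "b \<in> Basis"
          have cw: "\<bar>N * (w \<bullet> b)\<bar> < \<delta> b"
          proof -
            have "\<bar>N * (w \<bullet> b)\<bar> \<le> N * norm w"
              using Basis_le_norm[OF b, of w] N by (simp add: abs_mult)
            also have "\<dots> < N * d" using w N by simp
            also have "\<dots> = Min (\<delta> ` Basis)" unfolding d_def using N by simp
            also have "\<dots> \<le> \<delta> b" using b by simp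
            finally show ?thesis .
          qed
          show "(1 / N) * \<psi> ((N * (w \<bullet> b)) *\<^sub>R b) \<le> (1 / N) * (e / N * \<bar>N * (w \<bullet> b)\<bar>)"
            using psib[OF b cw] N by (intro mult_left_mono) auto
        qed
        also have "\<dots> = (\<Sum>b\<in>Basis. e / N * \<bar>w \<bullet> b\<bar>)"
          using N by (intro sum.cong) (auto simp: abs_mult)
        also have "\<dots> \<le> (\<Sum>b\<in>(Basis::'a set). e / N * norm w)"
        proof (rule sum_mono)
          fix b :: 'a assume "b \<in> Basis"
          then show "e / N * \<bar>w \<bullet> b\<bar> \<le> e / N * norm w"
            using e N by (intro mult_left_mono) (auto simp: Basis_le_norm)
        qed
        also have "\<dots> = e * norm w" using N by (simp add: N_def)
        finally show ?thesis .
      qed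
      have "\<psi> 0 \<le> (1 - 1/2) * \<psi> (- v) + (1/2) * \<psi> v"
        using convex_onD[OF cvpsi, of "1/2" "- v" v] by simp
      then have lo: "- \<psi> (- v) \<le> \<psi> v" using psi0 by simp
      show ?thesis using up[OF v] up[of "- v"] v lo by auto
    qed
    then show ?thesis using d by blast
  qed
  have "(g has_derivative D) (at x)"
    unfolding has_derivative_at_alt
  proof (intro conjI blD allI impI)
    fix e :: real assume "e > 0"
    from main[OF this] obtain d where d: "d > 0" "\<And>v. norm v < d \<Longrightarrow> \<bar>\<psi> v\<bar> \<le> e * norm v" by blast
    show "\<exists>d>0. \<forall>y. norm (y - x) < d \<longrightarrow> norm (g y - g x - D (y - x)) \<le> e * norm (y - x)"
      using d unfolding \<psi>_def by (intro exI[of _ d]) (metis add.commute diff_add_cancel real_norm_def)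
  qed
  then show ?thesis by (auto simp: differentiable_def)
qed





lemma grad_inner:
  assumes "linear D"
  shows "(\<Sum>b\<in>Basis. D b *\<^sub>R b) \<bullet> v = D v"
proof -
  have "(\<Sum>b\<in>Basis. D b *\<^sub>R b) \<bullet> v = (\<Sum>b\<in>Basis. (v \<bullet> b) * D b)"
    unfolding inner_sum_left inner_scaleR_left by (intro sum.cong) (auto simp: inner_commute)
  also have "\<dots> = D (\<Sum>b\<in>Basis. (v \<bullet> b) *\<^sub>R b)"
    using assms by (simp add: linear_sum linear_scale)
  also have "\<dots> = D v" by (simp add: euclidean_representation)
  finally show ?thesis .
qed

lemma grad_eq:
  assumes "(f has_derivative D) (at x)"
  shows "grad f x = (\<Sum>b\<in>Basis. D b *\<^sub>R b)"
  using assms frechet_derivative_at[OF assms] unfolding grad_def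
  by (auto simp: differentiable_def)

context
  fixes \<Omega> :: "'a::euclidean_space set"
  assumes op: "open \<Omega>" and nU: "\<Omega> \<noteq> UNIV"
begin

lemma cl: "closed (- \<Omega>)" "- \<Omega> \<noteq> {}"
  using op nU by auto

lemma d_lip: "\<bar>dist_compl \<Omega> x - dist_compl \<Omega> y\<bar> \<le> dist x y"
  unfolding dist_compl_def by (rule infdist_triangle_abs)

lemma d_nonneg: "dist_compl \<Omega> x \<ge> 0"
  unfolding dist_compl_def by (rule infdist_nonneg)

lemma d_pos: "x \<in> \<Omega> \<Longrightarrow> dist_compl \<Omega> x > 0"
  unfolding dist_compl_def using cl by (intro infdist_pos_not_in_closed) auto

lemma d_cont: "continuous_on UNIV (dist_compl \<Omega>)"
  unfolding dist_compl_def by (intro continuous_intros)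

lemma d_near: obtains y where "y \<notin> \<Omega>" "dist_compl \<Omega> x = dist x y"
  using infdist_attains_inf[OF cl, of x] unfolding dist_compl_def by auto

lemma d_le: "y \<notin> \<Omega> \<Longrightarrow> dist_compl \<Omega> x \<le> dist x y"
  unfolding dist_compl_def by (rule infdist_le) simp

definition gfun :: "'a \<Rightarrow> real" where
  "gfun x = x \<bullet> x - (dist_compl \<Omega> x)\<^sup>2"

lemma g_cont: "continuous_on UNIV gfun"
  unfolding gfun_def by (intro continuous_intros continuous_on_compose2[OF d_cont]) auto

lemma g_ge: "y \<notin> \<Omega> \<Longrightarrow> gfun z \<ge> 2 * (z \<bullet> y) - y \<bullet> y"
proof -
  assume y: "y \<notin> \<Omega>"
  have "(dist_compl \<Omega> z)\<^sup>2 \<le> (dist z y)\<^sup>2"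
    using d_le[OF y, of z] d_nonneg by (intro power_mono) auto
  also have "(dist z y)\<^sup>2 = (z - y) \<bullet> (z - y)" by (simp add: dist_norm power2_norm_eq_inner)
  finally show ?thesis unfolding gfun_def by (simp add: inner_diff inner_commute)
qed

lemma g_eq: "y \<notin> \<Omega> \<Longrightarrow> dist_compl \<Omega> z = dist z y \<Longrightarrow> gfun z = 2 * (z \<bullet> y) - y \<bullet> y"
proof -
  assume "dist_compl \<Omega> z = dist z y"
  then have "(dist_compl \<Omega> z)\<^sup>2 = (z - y) \<bullet> (z - y)" by (simp add: dist_norm power2_norm_eq_inner)
  then show ?thesis unfolding gfun_def by (simp add: inner_diff inner_commute)
qed

lemma g_convex: "convex_on UNIV gfun"
proof (rule convex_onI)
  fix t :: real and a c :: 'a assume t: "0 < t" "t < 1"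
  define w where "w = (1 - t) *\<^sub>R a + t *\<^sub>R c"
  obtain y where y: "y \<notin> \<Omega>" "dist_compl \<Omega> w = dist w y" by (rule d_near)
  have "gfun w = 2 * (w \<bullet> y) - y \<bullet> y" by (rule g_eq[OF y])
  also have "\<dots> = (1 - t) * (2 * (a \<bullet> y) - y \<bullet> y) + t * (2 * (c \<bullet> y) - y \<bullet> y)"
    unfolding w_def by (simp add: inner_add_left algebra_simps)
  also have "\<dots> \<le> (1 - t) * gfun a + t * gfun c"
    using g_ge[OF y(1), of a] g_ge[OF y(1), of c] t
    by (intro add_mono mult_left_mono) auto
  finally show "gfun ((1 - t) *\<^sub>R a + t *\<^sub>R c) \<le> (1 - t) * gfun a + t * gfun c"
    unfolding w_def .
qed simp

lemma d_diff_iff_g: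
  assumes x: "x \<in> \<Omega>"
  shows "dist_compl \<Omega> differentiable (at x) \<longleftrightarrow> gfun differentiable (at x)"
proof
  assume "dist_compl \<Omega> differentiable (at x)"
  then show "gfun differentiable (at x)"
    unfolding gfun_def by (intro derivative_intros) auto
next
  assume gd: "gfun differentiable (at x)"
  have eq: "dist_compl \<Omega> = (\<lambda>z. sqrt (z \<bullet> z - gfun z))"
    using d_nonneg by (auto simp: gfun_def fun_eq_iff)
  have pos: "x \<bullet> x - gfun x > 0"
    using d_pos[OF x] by (simp add: gfun_def)
  have "(\<lambda>z. z \<bullet> z - gfun z) differentiable (at x)"
    using gd by (intro derivative_intros) auto
  then obtain D where D: "((\<lambda>z. z \<bullet> z - gfun z) has_derivative D) (at x)"
    by (auto simp: differentiable_def)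
  show "dist_compl \<Omega> differentiable (at x)"
    unfolding eq differentiable_def using has_derivative_real_sqrt[OF pos D] by blast
qed


lemma d_diff_iff_N:
  assumes x: "x \<in> \<Omega>"
  shows "dist_compl \<Omega> differentiable (at x) \<longleftrightarrow> (\<forall>b\<in>Basis. x \<notin> Nset gfun b)"
proof
  assume "dist_compl \<Omega> differentiable (at x)"
  then have "gfun differentiable (at x)" using d_diff_iff_g[OF x] by simp
  then show "\<forall>b\<in>Basis. x \<notin> Nset gfun b" using diff_not_Nset by blast
next
  assume "\<forall>b\<in>Basis. x \<notin> Nset gfun b"
  then have "gfun differentiable (at x)" by (intro cvx_diff[OF g_convex]) auto
  then show "dist_compl \<Omega> differentiable (at x)" using d_diff_iff_g[OF x] by simp
qed

definition Nbad :: "'a set" where "Nbad = (\<Union>b\<in>Basis. Nset gfun b)"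

lemma Nbad_null: "Nbad \<in> null_sets lborel"
  unfolding Nbad_def using Nset_null[OF g_convex g_cont] by (intro null_sets_UN') (auto intro: countable_finite)

lemma Nbad_borel: "Nbad \<in> sets borel"
  unfolding Nbad_def using Nset_borel[OF g_cont] by auto

lemma d_diff_iff_Nbad: "x \<in> \<Omega> \<Longrightarrow> dist_compl \<Omega> differentiable (at x) \<longleftrightarrow> x \<notin> Nbad"
  using d_diff_iff_N unfolding Nbad_def by blast

lemma norm_grad_d:
  assumes x: "x \<in> \<Omega>" and dd: "dist_compl \<Omega> differentiable (at x)"
  shows "norm (grad (dist_compl \<Omega>) x) = 1"
proof -
  let ?d = "dist_compl \<Omega>"
  obtain D where D: "(?d has_derivative D) (at x)" using dd by (auto simp: differentiable_def)
  have lin: "linear D" using has_derivative_linear[OF D] .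
  define G where "G = (\<Sum>b\<in>Basis. D b *\<^sub>R b)"
  have gG: "grad ?d x = G" unfolding G_def by (rule grad_eq[OF D])
  have GD: "G \<bullet> v = D v" for v unfolding G_def by (rule grad_inner[OF lin])
  have Dle: "\<bar>D v\<bar> \<le> norm v" for v
  proof -
    have lim: "(\<lambda>n. real (Suc n) * (?d (x + (1 / real (Suc n)) *\<^sub>R v) - ?d x)) \<longlonglongrightarrow> D v"
      by (rule deriv_seq(1)[OF D])
    have "\<bar>real (Suc n) * (?d (x + (1 / real (Suc n)) *\<^sub>R v) - ?d x)\<bar> \<le> norm v" for n
    proof -
      have "\<bar>?d (x + (1 / real (Suc n)) *\<^sub>R v) - ?d x\<bar> \<le> dist (x + (1 / real (Suc n)) *\<^sub>R v) x"
        by (rule d_lip)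
      also have "\<dots> = norm v / real (Suc n)" by (simp add: dist_norm)
      finally have "\<bar>?d (x + (1 / real (Suc n)) *\<^sub>R v) - ?d x\<bar> * real (Suc n) \<le> norm v"
        by (simp add: field_simps)
      then show ?thesis by (simp add: abs_mult mult.commute)
    qed
    then show ?thesis
      using LIMSEQ_le_const2[OF tendsto_rabs[OF lim]] by blast
  qed
  have up: "norm G \<le> 1"
  proof (cases "G = 0")
    case False
    have "norm G * norm G = G \<bullet> G" by (simp add: power2_norm_eq_inner[symmetric] power2_eq_square)
    also have "\<dots> \<le> norm G" using Dle[of G] GD[of G] by simp
    finally show ?thesis using False by (simp add: mult_le_cancel_left1)
  qed simp
  obtain y where y: "y \<notin> \<Omega>" "?d x = dist x y" by (rule d_near)
  define v where "v = y - x"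
  have nv: "norm v = ?d x" unfolding v_def using y by (simp add: dist_norm norm_minus_commute)
  have "D v \<le> - norm v"
  proof -
    have lim: "(\<lambda>n. real (Suc n) * (?d (x + (1 / real (Suc n)) *\<^sub>R v) - ?d x)) \<longlonglongrightarrow> D v"
      by (rule deriv_seq(1)[OF D])
    have "real (Suc n) * (?d (x + (1 / real (Suc n)) *\<^sub>R v) - ?d x) \<le> - norm v" for n
    proof -
      have "?d (x + (1 / real (Suc n)) *\<^sub>R v) \<le> dist (x + (1 / real (Suc n)) *\<^sub>R v) y"
        by (rule d_le[OF y(1)])
      also have "(x + (1 / real (Suc n)) *\<^sub>R v) - y = (1 - 1 / real (Suc n)) *\<^sub>R (x - y)"
        unfolding v_def by (simp add: algebra_simps)
      then have "dist (x + (1 / real (Suc n)) *\<^sub>R v) y = (1 - 1 / real (Suc n)) * norm v"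
        unfolding v_def by (simp add: dist_norm norm_minus_commute)
      finally have "?d (x + (1 / real (Suc n)) *\<^sub>R v) \<le> (1 - 1 / real (Suc n)) * norm v" .
      then have "?d (x + (1 / real (Suc n)) *\<^sub>R v) - ?d x \<le> - norm v / real (Suc n)"
        using nv by (simp add: algebra_simps)
      then show ?thesis by (simp add: field_simps)
    qed
    then show ?thesis using lim by (intro LIMSEQ_le_const2) auto
  qed
  then have "G \<bullet> v \<le> - norm v" using GD by simp
  moreover have "- (norm G * norm v) \<le> G \<bullet> v"
    using Cauchy_Schwarz_ineq2[of G v] by (simp add: abs_le_iff)
  ultimately have "norm v \<le> norm G * norm v" by linarith
  moreover have "norm v > 0" using nv d_pos[OF x] by simp
  ultimately have "1 \<le> norm G" by simp
  then show ?thesis using up gG by simp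
qed

lemma grad_d_lim:
  assumes "dist_compl \<Omega> differentiable (at x)"
  shows "grad (dist_compl \<Omega>) x = (\<Sum>b\<in>Basis. lim (\<lambda>n. qp (dist_compl \<Omega>) x b n) *\<^sub>R b)"
proof -
  obtain D where D: "(dist_compl \<Omega> has_derivative D) (at x)" using assms by (auto simp: differentiable_def)
  have "lim (\<lambda>n. qp (dist_compl \<Omega>) x b n) = D b" for b
    unfolding qp_def by (rule limI[OF deriv_seq(1)[OF D]])
  then show ?thesis using grad_eq[OF D] by simp
qed

lemma grad_d_meas:
  "(\<lambda>x. indicator \<Omega> x *\<^sub>R grad (dist_compl \<Omega>) x) \<in> borel_measurable borel"
proof -
  have eq: "(\<lambda>x. indicator \<Omega> x *\<^sub>R grad (dist_compl \<Omega>) x)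
     = (\<lambda>x. indicator (\<Omega> - Nbad) x *\<^sub>R (\<Sum>b\<in>Basis. lim (\<lambda>n. qp (dist_compl \<Omega>) x b n) *\<^sub>R b))"
  proof
    fix x
    show "indicator \<Omega> x *\<^sub>R grad (dist_compl \<Omega>) x =
        indicator (\<Omega> - Nbad) x *\<^sub>R (\<Sum>b\<in>Basis. lim (\<lambda>n. qp (dist_compl \<Omega>) x b n) *\<^sub>R b)"
    proof (cases "x \<in> \<Omega>")
      case True
      show ?thesis
      proof (cases "x \<in> Nbad")
        case True
        then have "\<not> dist_compl \<Omega> differentiable (at x)" using d_diff_iff_Nbad \<open>x \<in> \<Omega>\<close> by blast
        then show ?thesis using True by (simp add: grad_def indicator_def)
      next
        case False
        then have "dist_compl \<Omega> differentiable (at x)" using d_diff_iff_Nbad \<open>x \<in> \<Omega>\<close> by blast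
        then show ?thesis using False \<open>x \<in> \<Omega>\<close> by (simp add: grad_d_lim indicator_def)
      qed
    qed (simp add: indicator_def)
  qed
  have qpm: "(\<lambda>x. qp (dist_compl \<Omega>) x b n) \<in> borel_measurable borel" for b n
    unfolding qp_def
    by (intro borel_measurable_continuous_onI continuous_intros continuous_on_compose2[OF d_cont]) auto
  have [measurable]: "\<Omega> - Nbad \<in> sets borel" using op Nbad_borel by auto
  show ?thesis unfolding eq
    by (intro borel_measurable_scaleR borel_measurable_indicator borel_measurable_sum
        borel_measurable_lim_metric qpm) auto
qed

end




lemma young_p:
  fixes X Y p :: real
  assumes X: "X \<ge> 0" and Y: "Y \<ge> 0" and p: "p \<ge> 1"
  shows "p * X * Y powr (p - 1) \<le> X powr p + (p - 1) * Y powr p"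
proof (cases "p = 1")
  case True
  then show ?thesis using X by (simp add: powr_one)
next
  case False
  then have p1: "p > 1" using p by simp
  define q where "q = p / (p - 1)"
  have q1: "q > 1" unfolding q_def using p1 by (simp add: field_simps)
  have pq: "1 / p + 1 / q = 1" unfolding q_def using p1 by (simp add: field_simps)
  have "X * Y powr (p - 1) \<le> X powr p / p + (Y powr (p - 1)) powr q / q"
    by (rule Youngs_inequality[OF p1 q1 pq X]) simp
  also have "(Y powr (p - 1)) powr q / q = Y powr p * ((p - 1) / p)"
    unfolding powr_powr q_def using p1 by simp
  finally have "X * Y powr (p - 1) \<le> X powr p / p + Y powr p * ((p - 1) / p)"
    by (simp add: divide_inverse)
  then have "p * (X * Y powr (p - 1)) \<le> p * (X powr p / p + Y powr p * ((p - 1) / p))"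
    using p1 by simp
  also have "\<dots> = X powr p + (p - 1) * Y powr p" using p1 by (simp add: field_simps)
  finally show ?thesis by (simp add: mult.assoc)
qed

lemma key_ineq:
  fixes a w \<delta> s p A :: real
  assumes a: "a \<ge> 0" and w: "w \<ge> 0" and \<delta>: "\<delta> > 0" and s: "s > 1" and p: "p \<ge> 1"
    and A: "A \<le> p * w powr (p - 1) * a"
  shows "a powr p / \<delta> powr (s - p) \<ge>
     ((s - 1) / p) powr p * (w powr p / \<delta> powr s)
     + ((s - 1) / p) powr (p - 1) * (A / \<delta> powr (s - 1) - (s - 1) * w powr p / \<delta> powr s)"
proof -
  define c where "c = (s - 1) / p"
  have c: "c > 0" unfolding c_def using s p by simp
  have P: "\<delta> powr s > 0" using \<delta> by simp
  have e1: "\<delta> powr s = \<delta> powr (s - p) * \<delta> powr p" by (simp flip: powr_add)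
  have e2: "\<delta> powr s = \<delta> powr (s - 1) * \<delta>" using powr_add[of \<delta> "s - 1" 1] \<delta> by (simp add: powr_one)
  have e3: "c powr p = c powr (p - 1) * c" using powr_add[of c "p - 1" 1] c by (simp add: powr_one)
  have cs: "c powr (p - 1) * (s - 1) = p * c powr p"
    using e3 p unfolding c_def by (simp add: field_simps)
  have pos1: "\<delta> powr (s - p) > 0" "\<delta> powr (s - 1) > 0" using \<delta> by auto
  have Y: "p * (a * \<delta>) * (c * w) powr (p - 1) \<le> (a * \<delta>) powr p + (p - 1) * (c * w) powr p"
    using young_p[of "a * \<delta>" "c * w" p] a w \<delta> c p by simp
  have Ad: "c powr (p - 1) * (A * \<delta>) \<le> p * (a * \<delta>) * (c * w) powr (p - 1)"
  proof -
    have "c powr (p - 1) * (A * \<delta>) \<le> c powr (p - 1) * ((p * w powr (p - 1) * a) * \<delta>)"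
      using A \<delta> by (intro mult_left_mono mult_right_mono) auto
    also have "\<dots> = p * (a * \<delta>) * (c * w) powr (p - 1)" by (simp add: powr_mult)
    finally show ?thesis .
  qed
  have "(c powr p * (w powr p / \<delta> powr s)
     + c powr (p - 1) * (A / \<delta> powr (s - 1) - (s - 1) * w powr p / \<delta> powr s)) * \<delta> powr s
     = c powr p * w powr p + c powr (p - 1) * (A * \<delta>) - (c powr (p - 1) * (s - 1)) * w powr p"
    using P pos1 e2 by (simp add: field_simps)
  also have "\<dots> = c powr (p - 1) * (A * \<delta>) - (p - 1) * (c powr p * w powr p)"
    unfolding cs by (simp add: algebra_simps)
  also have "\<dots> \<le> (a * \<delta>) powr p"
    using Y Ad by (simp add: powr_mult)
  also have "\<dots> = (a powr p / \<delta> powr (s - p)) * \<delta> powr s"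
    using e1 pos1 by (simp add: powr_mult)
  finally have "c powr p * (w powr p / \<delta> powr s)
     + c powr (p - 1) * (A / \<delta> powr (s - 1) - (s - 1) * w powr p / \<delta> powr s)
     \<le> a powr p / \<delta> powr (s - p)"
    by (rule mult_right_le_imp_le) (rule P)
  then show ?thesis unfolding c_def .
qed




lemma grad_eq':
  assumes "(f has_derivative D) (at x)"
  shows "grad f x = (\<Sum>b\<in>Basis. D b *\<^sub>R b)"
  using assms frechet_derivative_at[OF assms] unfolding grad_def
  by (auto simp: differentiable_def)

context
  fixes \<Omega> :: "'a::euclidean_space set" and u :: "'a \<Rightarrow> real" and p :: real
  assumes uC: "u \<in> Cc_inf \<Omega>" and p1: "p \<ge> 1"
begin

lemma u_diff: "u differentiable (at x)"
proof -
  have "\<forall>bs. set bs \<subseteq> Basis \<longrightarrow> iter_pd bs u differentiable_on UNIV"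
    using uC unfolding Cc_inf_def smooth_def by auto
  then have "iter_pd [] u differentiable_on UNIV" by (metis empty_subsetI list.set(1))
  then show ?thesis by (simp add: differentiable_on_def)
qed

lemma u_cont: "continuous_on UNIV u"
  using u_diff by (intro differentiable_imp_continuous_on) (auto simp: differentiable_on_def differentiable_at_withinI)

lemma grad_u_cont: "continuous_on UNIV (grad u)"
proof -
  have c: "continuous_on UNIV (\<lambda>x. frechet_derivative u (at x) b)" if "b \<in> Basis" for b
  proof -
    have "\<forall>bs. set bs \<subseteq> Basis \<longrightarrow> iter_pd bs u differentiable_on UNIV"
      using uC unfolding Cc_inf_def smooth_def by auto
    moreover have "set [b] \<subseteq> Basis" using that by simp
    ultimately have "iter_pd [b] u differentiable_on UNIV" by blast
    then show ?thesis by (simp add: differentiable_imp_continuous_on)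
  qed
  have "grad u = (\<lambda>x. \<Sum>b\<in>Basis. frechet_derivative u (at x) b *\<^sub>R b)"
    using u_diff by (auto simp: grad_def fun_eq_iff)
  moreover have "continuous_on UNIV (\<lambda>x. \<Sum>b\<in>Basis. frechet_derivative u (at x) b *\<^sub>R b)"
    by (intro continuous_on_sum continuous_on_scaleR continuous_on_const c)
  ultimately show ?thesis by simp
qed

definition Ksupp :: "'a set" where "Ksupp = closure {x. u x \<noteq> 0}"

lemma K_compact: "compact Ksupp" and K_sub: "Ksupp \<subseteq> \<Omega>"
  using uC unfolding Cc_inf_def Ksupp_def by auto

lemma out_K: assumes "x \<notin> Ksupp" shows "u x = 0" and "grad u x = 0"
proof -
  have cs: "{x. u x \<noteq> 0} \<subseteq> Ksupp" unfolding Ksupp_def by (rule closure_subset)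
  show "u x = 0" using assms cs by auto
  have "((\<lambda>_. 0) has_derivative (\<lambda>_. 0)) (at x)" by simp
  then have "(u has_derivative (\<lambda>_. 0)) (at x)"
  proof (rule has_derivative_transform_within_open)
    show "open (- Ksupp)" unfolding Ksupp_def by auto
    show "x \<in> - Ksupp" using assms by simp
    fix y assume "y \<in> - Ksupp"
    then show "0 = u y" using cs by auto
  qed
  then show "grad u x = 0" using grad_eq'[of u "\<lambda>_. 0" x] by simp
qed

definition wfun :: "'a \<Rightarrow> real" where "wfun x = \<bar>u x\<bar> powr p"
definition Ffun :: "'a \<Rightarrow> 'a" where
  "Ffun x = (p * \<bar>u x\<bar> powr (p - 1) * sgn (u x)) *\<^sub>R grad u x"

lemma w_diff_nz:
  assumes nz: "u x \<noteq> 0"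
  shows "wfun differentiable (at x)" and "grad wfun x = Ffun x"
proof -
  define \<sigma> where "\<sigma> = sgn (u x)"
  obtain Du where Du: "(u has_derivative Du) (at x)" using u_diff[of x] by (auto simp: differentiable_def)
  have pos: "0 < \<sigma> * u x" using nz unfolding \<sigma>_def by (simp add: sgn_real_def)
  have vd: "((\<lambda>y. \<sigma> * u y) has_derivative (\<lambda>h. \<sigma> * Du h)) (at x)"
    using Du by (auto intro!: derivative_eq_intros)
  have pd: "((\<lambda>y. (\<sigma> * u y) powr p) has_derivative
      (\<lambda>h. ((\<sigma> * u x) powr p) * ((\<lambda>h. 0) h * ln (\<sigma> * u x) + \<sigma> * Du h * p / (\<sigma> * u x)))) (at x)"
    by (rule has_derivative_powr[OF vd _ pos]) auto
  have S: "open {y. 0 < \<sigma> * u y}"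
    using u_cont by (intro open_Collect_less continuous_intros) auto
  have eqw: "wfun y = (\<sigma> * u y) powr p" if "0 < \<sigma> * u y" for y
  proof -
    have "\<bar>u y\<bar> = \<sigma> * u y" using that unfolding \<sigma>_def by (auto simp: sgn_real_def abs_if split: if_splits)
    then show ?thesis unfolding wfun_def by simp
  qed
  have av: "\<bar>u x\<bar> = \<sigma> * u x" using pos unfolding \<sigma>_def by (auto simp: sgn_real_def abs_if split: if_splits)
  have coef: "((\<sigma> * u x) powr p) * (\<sigma> * p / (\<sigma> * u x)) = p * \<bar>u x\<bar> powr (p - 1) * \<sigma>"
  proof -
    have "(\<sigma> * u x) powr p = (\<sigma> * u x) powr (p - 1) * (\<sigma> * u x)"
      using powr_add[of "\<sigma> * u x" "p - 1" 1] pos by (simp add: powr_one)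
    then show ?thesis using pos av by (simp add: field_simps)
  qed
  have wd: "(wfun has_derivative (\<lambda>h. (p * \<bar>u x\<bar> powr (p - 1) * \<sigma>) * Du h)) (at x)"
  proof (rule has_derivative_transform_within_open[OF _ S])
    show "((\<lambda>y. (\<sigma> * u y) powr p) has_derivative (\<lambda>h. (p * \<bar>u x\<bar> powr (p - 1) * \<sigma>) * Du h)) (at x)"
    proof (rule has_derivative_eq_rhs[OF pd])
      show "(\<lambda>h. ((\<sigma> * u x) powr p) * ((\<lambda>h. 0) h * ln (\<sigma> * u x) + \<sigma> * Du h * p / (\<sigma> * u x)))
          = (\<lambda>h. (p * \<bar>u x\<bar> powr (p - 1) * \<sigma>) * Du h)"
      proof
        fix h
        have "((\<sigma> * u x) powr p) * ((\<lambda>h. 0) h * ln (\<sigma> * u x) + \<sigma> * Du h * p / (\<sigma> * u x))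
            = (((\<sigma> * u x) powr p) * (\<sigma> * p / (\<sigma> * u x))) * Du h"
          by simp
        then show "((\<sigma> * u x) powr p) * ((\<lambda>h. 0) h * ln (\<sigma> * u x) + \<sigma> * Du h * p / (\<sigma> * u x))
            = (p * \<bar>u x\<bar> powr (p - 1) * \<sigma>) * Du h" unfolding coef .
      qed
    qed
    show "x \<in> {y. 0 < \<sigma> * u y}" using pos by simp
    show "\<And>y. y \<in> {y. 0 < \<sigma> * u y} \<Longrightarrow> (\<sigma> * u y) powr p = wfun y" using eqw by simp
  qed
  then show "wfun differentiable (at x)" by (auto simp: differentiable_def)
  have "grad wfun x = (\<Sum>b\<in>Basis. ((p * \<bar>u x\<bar> powr (p - 1) * \<sigma>) * Du b) *\<^sub>R b)"
    by (rule grad_eq'[OF wd])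
  also have "\<dots> = (p * \<bar>u x\<bar> powr (p - 1) * \<sigma>) *\<^sub>R (\<Sum>b\<in>Basis. Du b *\<^sub>R b)"
    by (simp add: scaleR_sum_right)
  also have "\<dots> = Ffun x" unfolding Ffun_def \<sigma>_def using grad_eq'[OF Du] by simp
  finally show "grad wfun x = Ffun x" .
qed

lemma grad_w:
  assumes wd: "wfun differentiable (at x)"
  shows "grad wfun x = Ffun x"
proof (cases "u x = 0")
  case True
  obtain W where W: "(wfun has_derivative W) (at x)" using wd by (auto simp: differentiable_def)
  have "\<forall>y. wfun x \<le> wfun y" unfolding wfun_def using True by auto
  then have ev: "eventually (\<lambda>y. wfun x \<le> wfun y) (at x)" by (rule always_eventually)
  have "W = (\<lambda>h. 0)" by (rule has_derivative_local_min[OF W ev])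
  then have "grad wfun x = (\<Sum>b\<in>Basis. (0::real) *\<^sub>R b)" using grad_eq'[OF W] by simp
  then have "grad wfun x = 0" by simp
  moreover have "Ffun x = 0" unfolding Ffun_def using True by simp
  ultimately show ?thesis by simp
next
  case False
  then show ?thesis by (rule w_diff_nz(2))
qed

lemma w_nd: "\<not> wfun differentiable (at x) \<Longrightarrow> u x = 0"
  using w_diff_nz(1) by blast

lemma norm_F: "norm (Ffun x) = p * \<bar>u x\<bar> powr (p - 1) * norm (grad u x)"
proof (cases "u x = 0")
  case False
  then have "\<bar>sgn (u x)\<bar> = 1" by (simp add: abs_sgn_eq)
  then show ?thesis unfolding Ffun_def using p1 by (simp add: abs_mult)
qed (simp add: Ffun_def)

end




context
  fixes \<Omega> :: "'a::euclidean_space set" and u :: "'a \<Rightarrow> real" and s p :: real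
  assumes op: "open \<Omega>" and nU: "\<Omega> \<noteq> UNIV"
    and uC: "u \<in> Cc_inf \<Omega>" and s1: "s > 1" and p1: "p \<ge> 1"
begin

abbreviation "dd \<equiv> dist_compl \<Omega>"

definition phi :: "'a \<Rightarrow> real" where
  "phi x = \<bar>u x\<bar> powr p / dd x powr (s - 1)"

lemma grad_phi:
  assumes x: "x \<in> \<Omega>" and ddiff: "dd differentiable (at x)"
  shows "grad phi x = (1 / dd x powr (s - 1)) *\<^sub>R Ffun u p x
           - ((s - 1) * \<bar>u x\<bar> powr p / dd x powr s) *\<^sub>R grad dd x"
proof -
  have dpos: "dd y > 0" if "y \<in> \<Omega>" for y using d_pos[OF op nU that] .
  obtain Dd where Dd: "(dd has_derivative Dd) (at x)" using ddiff by (auto simp: differentiable_def)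
  have phi_eq: "phi y = wfun u p y * dd y powr (1 - s)" if "y \<in> \<Omega>" for y
  proof -
    have "dd y powr (1 - s) = 1 / dd y powr (s - 1)"
      using powr_minus_divide[of "dd y" "s - 1"] by simp
    then show ?thesis unfolding phi_def wfun_def[OF uC p1] by simp
  qed
  show ?thesis
  proof (cases "wfun u p differentiable (at x)")
    case True
    then obtain W where W: "(wfun u p has_derivative W) (at x)" by (auto simp: differentiable_def)
    have pd: "((\<lambda>y. dd y powr (1 - s)) has_derivative
        (\<lambda>h. dd x powr (1 - s) * ((\<lambda>h. 0) h * ln (dd x) + Dd h * (1 - s) / dd x))) (at x)"
      by (rule has_derivative_powr[OF Dd _ dpos[OF x]]) auto
    define \<alpha> where "\<alpha> = dd x powr (1 - s)"
    define \<beta> where "\<beta> = wfun u p x * (dd x powr (1 - s) * (1 - s) / dd x)"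
    have md: "((\<lambda>y. wfun u p y * dd y powr (1 - s)) has_derivative
        (\<lambda>h. \<alpha> * W h + \<beta> * Dd h)) (at x)"
    proof (rule has_derivative_eq_rhs[OF has_derivative_mult[OF W pd]])
      show "(\<lambda>h. wfun u p x * (dd x powr (1 - s) * ((\<lambda>h. 0) h * ln (dd x) + Dd h * (1 - s) / dd x))
            + W h * dd x powr (1 - s)) = (\<lambda>h. \<alpha> * W h + \<beta> * Dd h)"
        unfolding \<alpha>_def \<beta>_def by (auto simp: fun_eq_iff algebra_simps)
    qed
    have phid: "(phi has_derivative (\<lambda>h. \<alpha> * W h + \<beta> * Dd h)) (at x)"
      by (rule has_derivative_transform_within_open[OF md op x]) (simp add: phi_eq)
    have "grad phi x = (\<Sum>b\<in>Basis. (\<alpha> * W b + \<beta> * Dd b) *\<^sub>R b)"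
      by (rule grad_eq'[OF phid])
    also have "\<dots> = \<alpha> *\<^sub>R (\<Sum>b\<in>Basis. W b *\<^sub>R b) + \<beta> *\<^sub>R (\<Sum>b\<in>Basis. Dd b *\<^sub>R b)"
      by (simp add: scaleR_sum_right scaleR_add_left sum.distrib)
    also have "(\<Sum>b\<in>Basis. W b *\<^sub>R b) = Ffun u p x"
      using grad_eq'[OF W] grad_w[OF uC p1 True] by simp
    also have "(\<Sum>b\<in>Basis. Dd b *\<^sub>R b) = grad dd x"
      using grad_eq'[OF Dd] by simp
    also have "\<alpha> = 1 / dd x powr (s - 1)"
      unfolding \<alpha>_def using powr_minus_divide[of "dd x" "s - 1"] by simp
    also have "\<beta> = - ((s - 1) * \<bar>u x\<bar> powr p / dd x powr s)"
    proof -
      have "dd x powr (1 - s) = dd x powr (- s) * dd x"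
        using powr_add[of "dd x" "- s" 1] dpos[OF x] by (simp add: powr_one)
      then have "dd x powr (1 - s) / dd x = 1 / dd x powr s"
        using dpos[OF x] powr_minus_divide[of "dd x" s] by simp
      moreover have "\<beta> = wfun u p x * (1 - s) * (dd x powr (1 - s) / dd x)"
        unfolding \<beta>_def by simp
      ultimately have "\<beta> = wfun u p x * (1 - s) * (1 / dd x powr s)" by simp
      moreover have "dd x powr s > 0" using dpos[OF x] by simp
      ultimately show ?thesis unfolding wfun_def[OF uC p1] by (simp add: field_simps)
    qed
    finally show ?thesis by (simp add: algebra_simps)
  next
    case False
    have u0: "u x = 0" using w_nd[OF uC p1 False] .
    have "\<not> phi differentiable (at x)"
    proof
      assume "phi differentiable (at x)"
      then obtain P where P: "(phi has_derivative P) (at x)" by (auto simp: differentiable_def)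
      have pd: "((\<lambda>y. dd y powr (s - 1)) has_derivative
          (\<lambda>h. dd x powr (s - 1) * ((\<lambda>h. 0) h * ln (dd x) + Dd h * (s - 1) / dd x))) (at x)"
        by (rule has_derivative_powr[OF Dd _ dpos[OF x]]) auto
      obtain Q where Q: "((\<lambda>y. phi y * dd y powr (s - 1)) has_derivative Q) (at x)"
        using has_derivative_mult[OF P pd] by blast
      have "(wfun u p has_derivative Q) (at x)"
      proof (rule has_derivative_transform_within_open[OF Q op x])
        fix y assume "y \<in> \<Omega>"
        then have "dd y > 0" using dpos by blast
        then have "dd y powr (s - 1) > 0" by simp
        then show "phi y * dd y powr (s - 1) = wfun u p y" unfolding phi_def wfun_def[OF uC p1] by simp
      qed
      then show False using False by (auto simp: differentiable_def)
    qed
    then have "grad phi x = 0" by (simp add: grad_def)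
    moreover have "Ffun u p x = 0" unfolding Ffun_def[OF uC p1] using u0 by simp
    ultimately show ?thesis using u0 by simp
  qed
qed


lemma cont_bound:
  fixes f :: "'a \<Rightarrow> real"
  assumes "compact K" "continuous_on K f"
  shows "\<exists>B. \<forall>x\<in>K. \<bar>f x\<bar> \<le> B"
proof -
  have "bounded (f ` K)" using assms by (intro compact_imp_bounded compact_continuous_image)
  then show ?thesis by (auto simp: bounded_real)
qed

lemma main:
  "(\<integral>x\<in>\<Omega>. norm (grad u x) powr p / dd x powr (s - p) \<partial>lborel)
     \<ge> ((s - 1) / p) powr p * (\<integral>x\<in>\<Omega>. \<bar>u x\<bar> powr p / dd x powr s \<partial>lborel)
       + ((s - 1) / p) powr (p - 1) *
         neg_lap_pair \<Omega> dd (\<lambda>x. \<bar>u x\<bar> powr p / dd x powr (s - 1))"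
proof -
  have phiE: "(\<lambda>x. \<bar>u x\<bar> powr p / dd x powr (s - 1)) = phi" by (simp add: fun_eq_iff phi_def)
  have dpos: "dd y > 0" if "y \<in> \<Omega>" for y using d_pos[OF op nU that] .
  define K where "K = Ksupp u"
  have Kc: "compact K" unfolding K_def by (rule K_compact[OF uC p1])
  have KO: "K \<subseteq> \<Omega>" unfolding K_def by (rule K_sub[OF uC p1])
  have u0: "u x = 0" and gu0: "grad u x = 0" if "x \<notin> K" for x
    using out_K[OF uC p1, of x] that unfolding K_def by auto
  define E where "E x = indicator \<Omega> x *\<^sub>R grad dd x" for x
  have Em[measurable]: "E \<in> borel_measurable borel"
    unfolding E_def using grad_d_meas[OF op nU] by simp
  have normE: "norm (E x) \<le> 1" for x
  proof (cases "x \<in> \<Omega> \<and> dd differentiable (at x)")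
    case True then show ?thesis using norm_grad_d[OF op nU] unfolding E_def by simp
  next
    case False then show ?thesis unfolding E_def by (auto simp: grad_def indicator_def)
  qed
  define F where "F = Ffun u p"
  have Fdef: "F x = (p * \<bar>u x\<bar> powr (p - 1) * sgn (u x)) *\<^sub>R grad u x" for x
    unfolding F_def by (rule Ffun_def[OF uC p1])
  have normF: "norm (F x) = p * \<bar>u x\<bar> powr (p - 1) * norm (grad u x)" for x
    unfolding F_def by (rule norm_F[OF uC p1])
  have dm[measurable]: "dd \<in> borel_measurable borel"
    using d_cont[OF op nU] by (rule borel_measurable_continuous_onI)
  have um[measurable]: "u \<in> borel_measurable borel"
    using u_cont[OF uC p1] by (rule borel_measurable_continuous_onI)
  have gum[measurable]: "grad u \<in> borel_measurable borel"
    using grad_u_cont[OF uC p1] by (rule borel_measurable_continuous_onI)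
  have Om[measurable]: "\<Omega> \<in> sets borel" using op by simp
  have Fm[measurable]: "F \<in> borel_measurable borel"
    unfolding Fdef[abs_def] by measurable
  define f0 where "f0 x = indicator \<Omega> x *\<^sub>R (norm (grad u x) powr p / dd x powr (s - p))" for x
  define f1 where "f1 x = indicator \<Omega> x *\<^sub>R (\<bar>u x\<bar> powr p / dd x powr s)" for x
  define f2 where "f2 x = indicator \<Omega> x *\<^sub>R (grad dd x \<bullet> grad phi x)" for x
  define f2' where "f2' x = E x \<bullet> ((1 / dd x powr (s - 1)) *\<^sub>R F x
        - ((s - 1) * \<bar>u x\<bar> powr p / dd x powr s) *\<^sub>R E x)" for x
  have f2eq: "f2 x = f2' x" for x
  proof (cases "x \<in> \<Omega>")
    case True
    show ?thesis
    proof (cases "dd differentiable (at x)")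
      case True
      then show ?thesis unfolding f2_def f2'_def E_def F_def using grad_phi[OF \<open>x \<in> \<Omega>\<close> True] \<open>x \<in> \<Omega>\<close>
        by simp
    next
      case False
      then show ?thesis unfolding f2_def f2'_def E_def by (simp add: grad_def)
    qed
  next
    case False
    then show ?thesis unfolding f2_def f2'_def E_def by simp
  qed
  have f0m: "f0 \<in> borel_measurable lborel" unfolding f0_def by measurable
  have f1m: "f1 \<in> borel_measurable lborel" unfolding f1_def by measurable
  have f2m: "f2 \<in> borel_measurable lborel"
  proof -
    have "f2' \<in> borel_measurable borel" unfolding f2'_def by measurable
    then show ?thesis using f2eq by (simp add: fun_eq_iff[symmetric] f2eq[abs_def] measurable_lborel1)
  qed

  obtain U where U: "\<And>x. x \<in> K \<Longrightarrow> \<bar>u x\<bar> \<le> U"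
    using cont_bound[OF Kc continuous_on_subset[OF u_cont[OF uC p1] subset_UNIV]] by blast
  have cgu: "continuous_on K (\<lambda>x. norm (grad u x))"
    using continuous_on_subset[OF grad_u_cont[OF uC p1] subset_UNIV] by (intro continuous_intros)
  obtain G where G: "\<And>x. x \<in> K \<Longrightarrow> norm (grad u x) \<le> G"
    using cont_bound[OF Kc cgu] by fastforce
  have Bd: "\<exists>B. \<forall>x\<in>K. 1 / dd x powr a \<le> B" for a
  proof -
    have "continuous_on K (\<lambda>x. dd x powr (- a))"
    proof (intro continuous_on_powr continuous_on_const)
      show "continuous_on K dd" using continuous_on_subset[OF d_cont[OF op nU] subset_UNIV] .
      show "\<forall>x\<in>K. dd x \<noteq> 0" using dpos KO by (metis less_irrefl subsetD)
    qed
    from cont_bound[OF Kc this] obtain B where "\<forall>x\<in>K. \<bar>dd x powr (- a)\<bar> \<le> B" by blast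
    then show ?thesis by (intro exI[of _ B]) (auto simp: powr_minus_divide)
  qed
  obtain B0 where B0: "\<And>x. x \<in> K \<Longrightarrow> 1 / dd x powr (s - p) \<le> B0" using Bd by blast
  obtain B1 where B1: "\<And>x. x \<in> K \<Longrightarrow> 1 / dd x powr s \<le> B1" using Bd by blast
  obtain B2 where B2: "\<And>x. x \<in> K \<Longrightarrow> 1 / dd x powr (s - 1) \<le> B2" using Bd by blast
  have intK: "integrable lborel (indicator K :: 'a \<Rightarrow> real)"
    using Kc by (intro integrable_real_indicator emeasure_compact_finite) (auto intro: borel_compact)
  have intg: "integrable lborel f"
    if fm: "f \<in> borel_measurable lborel" and f0: "\<And>x. x \<notin> K \<Longrightarrow> f x = 0"
      and fb: "\<And>x. x \<in> K \<Longrightarrow> \<bar>f x\<bar> \<le> Mb" for f :: "'a \<Rightarrow> real" and Mb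
  proof -
    have ib: "integrable lborel (\<lambda>x. \<bar>Mb\<bar> * indicator K x)" using intK by simp
    have "AE x in lborel. norm (f x) \<le> norm (\<bar>Mb\<bar> * indicator K x)"
    proof (rule AE_I2)
      fix x show "norm (f x) \<le> norm (\<bar>Mb\<bar> * indicator K x)"
        using f0[of x] fb[of x] by (cases "x \<in> K") auto
    qed
    then show ?thesis by (rule Bochner_Integration.integrable_bound[OF ib fm])
  qed
  have Fout: "F x = 0" if "x \<notin> K" for x using gu0[OF that] Fdef[of x] by simp
  have int0: "integrable lborel f0"
  proof (rule intg[OF f0m])
    fix x assume "x \<notin> K" then show "f0 x = 0" unfolding f0_def using gu0 by simp
  next
    fix x assume x: "x \<in> K"
    have "norm (grad u x) powr p \<le> G powr p" using G[OF x] p1 by (intro powr_mono2) auto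
    moreover have "1 / dd x powr (s - p) \<le> B0" using B0[OF x] .
    moreover have "0 \<le> 1 / dd x powr (s - p)" by simp
    ultimately have "norm (grad u x) powr p * (1 / dd x powr (s - p)) \<le> G powr p * B0"
      by (intro mult_mono) auto
    then show "\<bar>f0 x\<bar> \<le> G powr p * B0" unfolding f0_def using x KO by (auto simp: indicator_def)
  qed
  have int1: "integrable lborel f1"
  proof (rule intg[OF f1m])
    fix x assume "x \<notin> K" then show "f1 x = 0" unfolding f1_def using u0 by simp
  next
    fix x assume x: "x \<in> K"
    have "\<bar>u x\<bar> powr p \<le> U powr p" using U[OF x] p1 by (intro powr_mono2) auto
    moreover have "1 / dd x powr s \<le> B1" using B1[OF x] .
    moreover have "0 \<le> 1 / dd x powr s" by simp
    ultimately have "\<bar>u x\<bar> powr p * (1 / dd x powr s) \<le> U powr p * B1"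
      by (intro mult_mono) auto
    then show "\<bar>f1 x\<bar> \<le> U powr p * B1" unfolding f1_def using x KO by (auto simp: indicator_def)
  qed
  have int2: "integrable lborel f2"
  proof (rule intg[OF f2m])
    fix x assume "x \<notin> K" then show "f2 x = 0" unfolding f2eq f2'_def using u0 Fout by simp
  next
    fix x assume x: "x \<in> K"
    define \<alpha> where "\<alpha> = 1 / dd x powr (s - 1)"
    define \<beta> where "\<beta> = (s - 1) * \<bar>u x\<bar> powr p / dd x powr s"
    have "\<bar>f2' x\<bar> \<le> norm (E x) * norm (\<alpha> *\<^sub>R F x - \<beta> *\<^sub>R E x)"
      unfolding f2'_def \<alpha>_def \<beta>_def by (rule Cauchy_Schwarz_ineq2)
    also have "\<dots> \<le> 1 * norm (\<alpha> *\<^sub>R F x - \<beta> *\<^sub>R E x)"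
      using normE by (intro mult_right_mono) auto
    also have "\<dots> \<le> \<bar>\<alpha>\<bar> * norm (F x) + \<bar>\<beta>\<bar> * norm (E x)"
      using norm_triangle_ineq4[of "\<alpha> *\<^sub>R F x" "\<beta> *\<^sub>R E x"] by simp
    also have "\<dots> \<le> B2 * (p * U powr (p - 1) * G) + (s - 1) * U powr p * B1 * 1"
    proof (intro add_mono mult_mono)
      show "\<bar>\<alpha>\<bar> \<le> B2" unfolding \<alpha>_def using B2[OF x] by simp
      have up: "\<bar>u x\<bar> powr (p - 1) \<le> U powr (p - 1)" using U[OF x] p1 by (intro powr_mono2) auto
      show "norm (F x) \<le> p * U powr (p - 1) * G"
        unfolding normF using up G[OF x] p1 by (intro mult_mono) auto
      show "\<bar>\<beta>\<bar> \<le> (s - 1) * U powr p * B1"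
      proof -
        have "\<bar>u x\<bar> powr p \<le> U powr p" using U[OF x] p1 by (intro powr_mono2) auto
        then have "\<bar>u x\<bar> powr p * (1 / dd x powr s) \<le> U powr p * B1"
          using B1[OF x] by (intro mult_mono) auto
        then have "(s - 1) * (\<bar>u x\<bar> powr p * (1 / dd x powr s)) \<le> (s - 1) * (U powr p * B1)"
          using s1 by (intro mult_left_mono) auto
        then show ?thesis unfolding \<beta>_def using s1 by (simp add: abs_mult)
      qed
      show "norm (E x) \<le> 1" by (rule normE)
      show "0 \<le> B2" using B2[OF x] by (smt (verit) divide_nonneg_nonneg powr_ge_zero)
      show "0 \<le> (s - 1) * U powr p * B1"
        using B1[OF x] s1 by (smt (verit) divide_nonneg_nonneg mult_nonneg_nonneg powr_ge_zero)
    qed auto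
    finally show "\<bar>f2 x\<bar> \<le> B2 * (p * U powr (p - 1) * G) + (s - 1) * U powr p * B1 * 1"
      unfolding f2eq .
  qed

  define c where "c = (s - 1) / p"
  have pt: "c powr p * f1 x + c powr (p - 1) * f2 x \<le> f0 x" if nb: "x \<notin> Nbad \<Omega>" for x
  proof (cases "x \<in> \<Omega>")
    case False
    then show ?thesis unfolding f0_def f1_def f2_def by simp
  next
    case True
    have dif: "dd differentiable (at x)" using d_diff_iff_Nbad[OF op nU True] nb by simp
    have ng: "norm (grad dd x) = 1" by (rule norm_grad_d[OF op nU True dif])
    have Ex: "E x = grad dd x" unfolding E_def using True by simp
    have EE: "grad dd x \<bullet> grad dd x = 1" using ng by (simp add: power2_norm_eq_inner[symmetric])
    define A where "A = grad dd x \<bullet> F x"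
    have A: "A \<le> p * \<bar>u x\<bar> powr (p - 1) * norm (grad u x)"
    proof -
      have "A \<le> norm (grad dd x) * norm (F x)" unfolding A_def
        using Cauchy_Schwarz_ineq2[of "grad dd x" "F x"] by linarith
      then show ?thesis using ng normF by simp
    qed
    have ki: "c powr p * (\<bar>u x\<bar> powr p / dd x powr s)
       + c powr (p - 1) * (A / dd x powr (s - 1) - (s - 1) * \<bar>u x\<bar> powr p / dd x powr s)
       \<le> norm (grad u x) powr p / dd x powr (s - p)"
      unfolding c_def by (rule key_ineq[OF norm_ge_zero abs_ge_zero dpos[OF True] s1 p1]) (use A in \<open>simp add: mult.assoc mult.commute mult.left_commute\<close>)
    have "f2 x = A / dd x powr (s - 1) - (s - 1) * \<bar>u x\<bar> powr p / dd x powr s"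
      unfolding f2eq f2'_def Ex A_def using EE by (simp add: inner_diff_right)
    moreover have "f1 x = \<bar>u x\<bar> powr p / dd x powr s" unfolding f1_def using True by simp
    moreover have "f0 x = norm (grad u x) powr p / dd x powr (s - p)" unfolding f0_def using True by simp
    ultimately show ?thesis using ki by simp
  qed
  have AEi: "AE x in lborel. c powr p * f1 x + c powr (p - 1) * f2 x \<le> f0 x"
    using AE_not_in[OF Nbad_null[OF op nU]] by eventually_elim (rule pt)
  have "integral\<^sup>L lborel (\<lambda>x. c powr p * f1 x + c powr (p - 1) * f2 x) \<le> integral\<^sup>L lborel f0"
    by (rule integral_mono_AE[OF _ int0 AEi]) (intro Bochner_Integration.integrable_add integrable_mult_right int1 int2)
  moreover have "integral\<^sup>L lborel (\<lambda>x. c powr p * f1 x + c powr (p - 1) * f2 x)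
      = c powr p * integral\<^sup>L lborel f1 + c powr (p - 1) * integral\<^sup>L lborel f2"
    using int1 int2 by simp
  moreover have "(\<integral>x\<in>\<Omega>. norm (grad u x) powr p / dd x powr (s - p) \<partial>lborel) = integral\<^sup>L lborel f0"
    unfolding set_lebesgue_integral_def f0_def by simp
  moreover have "(\<integral>x\<in>\<Omega>. \<bar>u x\<bar> powr p / dd x powr s \<partial>lborel) = integral\<^sup>L lborel f1"
    unfolding set_lebesgue_integral_def f1_def by simp
  moreover have "neg_lap_pair \<Omega> dd (\<lambda>x. \<bar>u x\<bar> powr p / dd x powr (s - 1)) = integral\<^sup>L lborel f2"
    unfolding neg_lap_pair_def phiE set_lebesgue_integral_def f2_def by simp
  ultimately show ?thesis unfolding c_def by simp
qed

end



theorem lemma6p1: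
  fixes \<Omega> :: "'a::euclidean_space set" and u :: "'a \<Rightarrow> real" and s p :: real
  assumes "open \<Omega>" and "\<Omega> \<noteq> UNIV"
    and "u \<in> Cc_inf \<Omega>" and "s > 1" and "p \<ge> 1"
  shows "(\<integral>x\<in>\<Omega>. norm (grad u x) powr p / dist_compl \<Omega> x powr (s - p) \<partial>lborel)
     \<ge> ((s - 1) / p) powr p * (\<integral>x\<in>\<Omega>. \<bar>u x\<bar> powr p / dist_compl \<Omega> x powr s \<partial>lborel)
       + ((s - 1) / p) powr (p - 1) *
         neg_lap_pair \<Omega> (dist_compl \<Omega>) (\<lambda>x. \<bar>u x\<bar> powr p / dist_compl \<Omega> x powr (s - 1))"
  by (rule main[OF assms])

end
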